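(* For every positive integer $t$ there exist constants $\alpha,\beta,\gamma>0$ such that for all positive integers $s$ and $n\geq 2$, $$R_t(s,n)\leq \alpha s^{\beta} n\cdot (\log n)^{\gamma}.$$
   Context: A function $f:\mathbb{R}^{m}\to\mathbb{R}$ is linear if $f(\mathbf{x})=b+\sum_{i=1}^m a_i\mathbf{x}(i)$ for some reals $a_1,\dots,a_m,b$. A (finite, simple) graph $G$ is semilinear of complexity $t$ if $V(G)\subset\mathbb{R}^d$ for some positive integer $d$, and there are $t$ linear functions $f_1,\dots,f_t:\mathbb{R}^d\times\mathbb{R}^d\to\mathbb{R}$ and a Boolean function $\phi:\{\mathrm{F},\mathrm{T}\}^{3t}\to\{\mathrm{F},\mathrm{T}\}$ such that for distinct $\mathbf{x},\mathbf{y}\in V(G)$, $\{\mathbf{x},\mathbf{y}\}$ is an edge iff $\phi\big(\{f_i(\mathbf{x},\mathbf{y})<0,\ f_i(\mathbf{x},\mathbf{y})\leq 0,\ f_i(\mathbf{x},\mathbf{y})=0\}_{i\in[t]}\big)=\mathrm{T}$; it is assumed that this truth value is unchanged when $\mathbf{x}$ and $\mathbf{y}$ are swapped. $R_t(s,n)$ denotes the smallest $N$ such that every semilinear graph of complexity $t$ on $N$ vertices contains a clique of size $s$ or an independent set of size $n$. *)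

theory Defs
  imports Complex_Main
begin

text \<open>Points of R^d are real lists of length d. A linear function
  f : R^d x R^d -> R is given by a constant b and coefficient sequences a, c:
  f(x,y) = b + sum_{j<d} a j * x!j + sum_{j<d} c j * y!j.\<close>

definition lin_eval :: "nat \<Rightarrow> real \<Rightarrow> (nat \<Rightarrow> real) \<Rightarrow> (nat \<Rightarrow> real)
    \<Rightarrow> real list \<Rightarrow> real list \<Rightarrow> real" where
  "lin_eval d b a c x y = b + (\<Sum>j<d. a j * x ! j) + (\<Sum>j<d. c j * y ! j)"

definition sign_pattern :: "nat \<Rightarrow> (nat \<Rightarrow> real list \<Rightarrow> real list \<Rightarrow> real)
    \<Rightarrow> real list \<Rightarrow> real list \<Rightarrow> bool list" where
  "sign_pattern t f x y =
     concat (map (\<lambda>i. [f i x y < 0, f i x y \<le> 0, f i x y = 0]) [0..<t])"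

text \<open>A finite simple graph with vertex set V (a finite subset of R^d) and
  edge relation E (only its values on distinct vertices matter) is semilinear
  of complexity t.\<close>

definition semilinear_graph :: "nat \<Rightarrow> real list set \<Rightarrow> (real list \<Rightarrow> real list \<Rightarrow> bool) \<Rightarrow> bool" where
  "semilinear_graph t V E \<longleftrightarrow>
     finite V \<and>
     (\<forall>x\<in>V. \<forall>y\<in>V. x \<noteq> y \<longrightarrow> (E x y \<longleftrightarrow> E y x)) \<and>
     (\<exists>d::nat. d > 0 \<and> (\<forall>x\<in>V. length x = d) \<and>
       (\<exists>(b :: nat \<Rightarrow> real) (a :: nat \<Rightarrow> nat \<Rightarrow> real) (c :: nat \<Rightarrow> nat \<Rightarrow> real)
          (\<phi> :: bool list \<Rightarrow> bool).
          \<forall>x\<in>V. \<forall>y\<in>V. x \<noteq> y \<longrightarrow>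
            (E x y \<longleftrightarrow> \<phi> (sign_pattern t (\<lambda>i. lin_eval d (b i) (a i) (c i)) x y))))"

definition has_clique :: "real list set \<Rightarrow> (real list \<Rightarrow> real list \<Rightarrow> bool) \<Rightarrow> nat \<Rightarrow> bool" where
  "has_clique V E s \<longleftrightarrow>
     (\<exists>K\<subseteq>V. card K = s \<and> (\<forall>x\<in>K. \<forall>y\<in>K. x \<noteq> y \<longrightarrow> E x y))"

definition has_indep :: "real list set \<Rightarrow> (real list \<Rightarrow> real list \<Rightarrow> bool) \<Rightarrow> nat \<Rightarrow> bool" where
  "has_indep V E n \<longleftrightarrow>
     (\<exists>I\<subseteq>V. card I = n \<and> (\<forall>x\<in>I. \<forall>y\<in>I. x \<noteq> y \<longrightarrow> \<not> E x y))"

definition R_semilin :: "nat \<Rightarrow> nat \<Rightarrow> nat \<Rightarrow> nat" where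
  "R_semilin t s n = (LEAST N. \<forall>V E. semilinear_graph t V E \<and> card V = N \<longrightarrow>
                          has_clique V E s \<or> has_indep V E n)"

end

theory Submission
  imports Defs "HOL-Library.FuncSet"
begin

lemma coloring_bound:
  fixes V :: "'a set" and E :: "'a \<Rightarrow> 'a \<Rightarrow> bool" and kap :: "'a \<Rightarrow> 'k"
    and cv :: "'a \<Rightarrow> 'a \<Rightarrow> 'c" and e :: "'a \<Rightarrow> nat"
  assumes finV: "finite V" and inj: "inj_on e V"
  and sym: "\<And>x y. x\<in>V \<Longrightarrow> y\<in>V \<Longrightarrow> x\<noteq>y \<Longrightarrow> E x y = E y x"
  and trans: "\<And>x y z. x\<in>V \<Longrightarrow> y\<in>V \<Longrightarrow> z\<in>V \<Longrightarrow> cv x y = cv y z \<Longrightarrow> cv x z = cv x y"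
  and det: "\<And>x y x' y'. x\<in>V \<Longrightarrow> y\<in>V \<Longrightarrow> x'\<in>V \<Longrightarrow> y'\<in>V \<Longrightarrow> x\<noteq>y \<Longrightarrow> x'\<noteq>y'
      \<Longrightarrow> kap x = kap y \<Longrightarrow> kap x' = kap y' \<Longrightarrow> kap x = kap x' \<Longrightarrow> cv x y = cv x' y' \<Longrightarrow> E x y = E x' y'"
  and nocl: "\<And>K. K \<subseteq> V \<Longrightarrow> card K = s \<Longrightarrow> \<not>(\<forall>x\<in>K. \<forall>y\<in>K. x\<noteq>y \<longrightarrow> E x y)"
  and noind: "\<And>I. I \<subseteq> V \<Longrightarrow> card I = n \<Longrightarrow> \<not>(\<forall>x\<in>I. \<forall>y\<in>I. x\<noteq>y \<longrightarrow> \<not> E x y)"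
  and KS: "kap ` V \<subseteq> KS" "finite KS"
  and CS: "\<And>x y. x\<in>V \<Longrightarrow> y\<in>V \<Longrightarrow> cv x y \<in> CS" "finite CS"
  shows "card V \<le> card KS * s ^ card CS * (n - 1)"
proof -
  define T where "T c x y \<longleftrightarrow> x\<in>V \<and> y\<in>V \<and> kap x = kap y \<and> cv x y = c \<and> e x < e y" for c x y
  have Ttrans: "T c x z" if "T c x y" "T c y z" for c x y z
    using that trans[of x y z] unfolding T_def by auto
  define ch where "ch c C x \<longleftrightarrow> C \<subseteq> V \<and> x \<in> C \<and> (\<forall>z\<in>C. z \<noteq> x \<longrightarrow> T c z x)
      \<and> (\<forall>z1\<in>C. \<forall>z2\<in>C. z1 \<noteq> z2 \<longrightarrow> T c z1 z2 \<or> T c z2 z1)" for c C x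
  define h where "h c x = Max (card ` {C. ch c C x})" for c x
  have fin_ch: "finite {C. ch c C x}" for c x
    by (rule finite_subset[of _ "Pow V"]) (use finV ch_def in auto)
  have ch_single: "ch c {x} x" if "x \<in> V" for c x
    using that unfolding ch_def by auto
  have h_ge: "card C \<le> h c x" if "ch c C x" for c C x
    unfolding h_def using fin_ch that by (intro Max_ge) auto
  have h_ex: "\<exists>C. ch c C x \<and> card C = h c x" if "x \<in> V" for c x
  proof -
    have "h c x \<in> card ` {C. ch c C x}"
      unfolding h_def using fin_ch ch_single[OF that] by (intro Max_in) auto
    then show ?thesis by auto
  qed
  have h_mono: "h c x < h c y" if Txy: "T c x y" for c x y
  proof -
    have xV: "x \<in> V" and yV: "y \<in> V" using Txy T_def by auto
    obtain C where C: "ch c C x" "card C = h c x" using h_ex[OF xV] by blast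
    have CV: "C \<subseteq> V" using C(1) unfolding ch_def by simp
    have finC: "finite C" using CV finV finite_subset by blast
    have yC: "y \<notin> C"
    proof
      assume "y \<in> C"
      have "y \<noteq> x" using Txy T_def by auto
      then have "T c y x" using C(1) \<open>y \<in> C\<close> ch_def by auto
      then have "T c x x" using Ttrans Txy by blast
      then show False using T_def by auto
    qed
    have "ch c (insert y C) y"
      unfolding ch_def
    proof (intro conjI ballI impI)
      show "insert y C \<subseteq> V" using C(1) yV ch_def by auto
      show "y \<in> insert y C" by simp
    next
      fix z assume "z \<in> insert y C" "z \<noteq> y"
      then have "z \<in> C" by auto
      show "T c z y"
      proof (cases "z = x")
        case True then show ?thesis using Txy by simp
      next
        case False then have "T c z x" using C(1) \<open>z \<in> C\<close> ch_def by auto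
        then show ?thesis using Ttrans Txy by blast
      qed
    next
      fix z1 z2 assume z: "z1 \<in> insert y C" "z2 \<in> insert y C" "z1 \<noteq> z2"
      have zy: "T c z y" if "z \<in> C" for z
      proof (cases "z = x")
        case True then show ?thesis using Txy by simp
      next
        case False then have "T c z x" using C(1) \<open>z \<in> C\<close> ch_def by auto
        then show ?thesis using Ttrans Txy by blast
      qed
      show "T c z1 z2 \<or> T c z2 z1"
        using z zy C(1) unfolding ch_def by auto
    qed
    then have "card (insert y C) \<le> h c y" by (rule h_ge)
    then show ?thesis using C(2) yC finC by simp
  qed
  define edg where "edg k c \<longleftrightarrow> (\<exists>x0 y0. T c x0 y0 \<and> kap x0 = k \<and> E x0 y0)" for k c
  have h_bound: "h c x < s" if xV: "x \<in> V" and ed: "edg (kap x) c" for x c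
  proof (rule ccontr)
    assume "\<not> h c x < s"
    obtain C where C: "ch c C x" "card C = h c x" using h_ex[OF xV] by blast
    obtain K where K: "K \<subseteq> C" "card K = s" using \<open>\<not> h c x < s\<close> C(2)
      by (metis not_less obtain_subset_with_card_n)
    obtain x0 y0 where xy0: "T c x0 y0" "kap x0 = kap x" "E x0 y0" using ed edg_def by blast
    have kz: "kap z = kap x" if "z \<in> C" for z
      using that C(1) unfolding ch_def T_def by (cases "z = x") auto
    have "E z1 z2" if "T c z1 z2" "z1 \<in> C" "z2 \<in> C" for z1 z2
    proof -
      have "E z1 z2 = E x0 y0"
        using that xy0 kz[OF that(2)] kz[OF that(3)] unfolding T_def
        by (intro det) auto
      then show ?thesis using xy0 by simp
    qed
    then have "\<forall>z1\<in>K. \<forall>z2\<in>K. z1 \<noteq> z2 \<longrightarrow> E z1 z2"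
      using K C(1) sym unfolding ch_def by (metis subsetD)
    moreover have "K \<subseteq> V" using K C(1) ch_def by auto
    ultimately show False using nocl K(2) by blast
  qed
  have s_pos: "s > 0"
    using nocl[of "{}"] by (cases "s = 0") auto
  define col where "col x = (kap x, restrict (\<lambda>c. if edg (kap x) c then h c x else 0) CS)" for x
  have col_range: "col ` V \<subseteq> KS \<times> (PiE CS (\<lambda>_. {..<s}))"
    using KS(1) h_bound s_pos unfolding col_def by (auto simp: PiE_iff)
  have aux: "\<not> E x y" if "x \<in> V" "y \<in> V" "e x < e y" "col x = col y" for x y
  proof
    assume Exy: "E x y"
    have kk: "kap x = kap y" using that(4) col_def by simp
    define c where "c = cv x y"
    have cC: "c \<in> CS" using CS that c_def by auto
    have Txy: "T c x y" using that kk c_def T_def by auto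
    have ed: "edg (kap x) c" using Txy Exy edg_def by blast
    have "snd (col x) c = snd (col y) c" using that(4) by simp
    then have "h c x = h c y" using cC ed kk unfolding col_def by simp
    then show False using h_mono[OF Txy] by simp
  qed
  have indep: "\<not> E x y" if "x \<in> V" "y \<in> V" "x \<noteq> y" "col x = col y" for x y
  proof -
    have "e x \<noteq> e y" using inj that unfolding inj_on_def by blast
    then have "e x < e y \<or> e y < e x" by arith
    then show ?thesis
    proof
      assume "e x < e y" then show ?thesis using aux[of x y] that by simp
    next
      assume "e y < e x" then have "\<not> E y x" using aux[of y x] that by simp
      then show ?thesis using sym that by blast
    qed
  qed
  have fib: "card {x\<in>V. col x = k} \<le> n - 1" for k
  proof (rule ccontr)
    assume "\<not> ?thesis"
    then have "n \<le> card {x\<in>V. col x = k}" by arith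
    then obtain I where I: "I \<subseteq> {x\<in>V. col x = k}" "card I = n"
      using obtain_subset_with_card_n by blast
    then have "\<forall>x\<in>I. \<forall>y\<in>I. x\<noteq>y \<longrightarrow> \<not> E x y" using indep by auto
    moreover have "I \<subseteq> V" using I(1) by blast
    ultimately show False using noind[of I] I(2) by blast
  qed
  have "card V = (\<Sum>k\<in>col ` V. card {x\<in>V. col x = k})"
    using sum.image_gen[OF finV, of "\<lambda>_. 1" col] by (simp only: card_eq_sum)
  also have "\<dots> \<le> (\<Sum>k\<in>col ` V. n - 1)" by (intro sum_mono fib)
  also have "\<dots> = card (col ` V) * (n - 1)" by simp
  also have "\<dots> \<le> card (KS \<times> (PiE CS (\<lambda>_. {..<s}))) * (n - 1)"
    by (intro mult_right_mono card_mono col_range) (use KS CS in \<open>auto intro: finite_PiE\<close>)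
  also have "\<dots> = card KS * s ^ card CS * (n - 1)"
    using CS(2) by (simp add: card_cartesian_product card_PiE)
  finally show ?thesis .
qed

lemma div2_cases: "(x::nat) = 2*(x div 2) \<or> x = 2*(x div 2) + 1"
  by presburger

lemma prefix_sgn:
  fixes a1 b1 a2 b2 m :: nat
  assumes h1: "a1 div 2^m = b1 div 2^m" and h2: "a2 div 2^m = b2 div 2^m"
    and m1: "m > 0 \<Longrightarrow> a1 div 2^(m-1) \<noteq> b1 div 2^(m-1)"
    and m2: "m > 0 \<Longrightarrow> a2 div 2^(m-1) \<noteq> b2 div 2^(m-1)"
    and sg: "sgn (int a1 - int b1) = sgn (int a2 - int b2)"
  shows "sgn (int a1 - int b2) = (if a1 div 2^m < a2 div 2^m then -1
           else if a2 div 2^m < a1 div 2^m then 1 else sgn (int a1 - int b1))"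
proof (cases m)
  case 0
  then show ?thesis using h1 h2 by (auto simp: sgn_if)
next
  case (Suc k)
  have dv: "x div 2^m = x div 2^k div 2" for x :: nat
    using Suc by (simp only: power_Suc2 div_mult2_eq)
  have mono: "x < y" if "x div q < y div q" for x y q :: nat
    using that div_le_mono not_less by blast
  have mono2: "x div q \<le> y div q" if "x \<le> y" for x y q :: nat
    using that div_le_mono by blast
  define A1 where "A1 = a1 div 2^k"
  define B1 where "B1 = b1 div 2^k"
  define A2 where "A2 = a2 div 2^k"
  define B2 where "B2 = b2 div 2^k"
  have n1: "A1 \<noteq> B1" using m1 Suc A1_def B1_def by simp
  have n2: "A2 \<noteq> B2" using m2 Suc A2_def B2_def by simp
  have e1: "A1 div 2 = B1 div 2" using h1 dv A1_def B1_def by simp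
  have e2: "A2 div 2 = B2 div 2" using h2 dv A2_def B2_def by simp
  show ?thesis
  proof (cases "a1 div 2^m < a2 div 2^m")
    case True
    then have "a1 div 2^m < b2 div 2^m" using h2 by simp
    then have "a1 < b2" by (rule mono)
    then show ?thesis using True by simp
  next
    case F1: False
    show ?thesis
    proof (cases "a2 div 2^m < a1 div 2^m")
      case True
      then have "b2 div 2^m < a1 div 2^m" using h2 by simp
      then have "b2 < a1" by (rule mono)
      then show ?thesis using True F1 by simp
    next
      case False
      then have eq: "A1 div 2 = A2 div 2" using F1 dv A1_def A2_def by simp
      have c1: "a1 < b1 \<Longrightarrow> A1 \<le> B1" "b1 < a1 \<Longrightarrow> B1 \<le> A1"
        "a2 < b2 \<Longrightarrow> A2 \<le> B2" "b2 < a2 \<Longrightarrow> B2 \<le> A2"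
        using mono2 A1_def B1_def A2_def B2_def by auto
      have c2: "A1 < B2 \<Longrightarrow> a1 < b2" "B2 < A1 \<Longrightarrow> b2 < a1"
        unfolding A1_def B2_def by (erule mono)+
      define Q where "Q = A1 div 2"
      have r: "A1 = 2*Q \<or> A1 = 2*Q+1" "B1 = 2*Q \<or> B1 = 2*Q+1" "A2 = 2*Q \<or> A2 = 2*Q+1"
        "B2 = 2*Q \<or> B2 = 2*Q+1"
        using div2_cases[of A1] div2_cases[of B1] div2_cases[of A2] div2_cases[of B2] e1 e2 eq
        unfolding Q_def by simp_all
      have "a1 \<noteq> b1" using n1 A1_def B1_def by auto
      have "a2 \<noteq> b2" using n2 A2_def B2_def by auto
      show ?thesis
      proof (cases "a1 < b1")
        case True
        then have "a2 < b2" using sg \<open>a2 \<noteq> b2\<close> by (auto simp: sgn_if split: if_splits)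
        then have "A1 < B2" using c1(1)[OF True] c1(3)[OF \<open>a2 < b2\<close>] n1 n2 r by linarith
        then have "a1 < b2" using c2 by simp
        then show ?thesis using True F1 False by simp
      next
        case False2: False
        then have "b1 < a1" using \<open>a1 \<noteq> b1\<close> by simp
        then have "b2 < a2" using sg \<open>a2 \<noteq> b2\<close> by (auto simp: sgn_if split: if_splits)
        then have "B2 < A1" using c1(2)[OF \<open>b1 < a1\<close>] c1(4)[OF \<open>b2 < a2\<close>] n1 n2 r by linarith
        then have "b2 < a1" using c2 by simp
        then show ?thesis using \<open>b1 < a1\<close> F1 False by simp
      qed
    qed
  qed
qed

definition rk :: "real set \<Rightarrow> real \<Rightarrow> nat" where
  "rk S v = card {w\<in>S. w < v}"

lemma rk_less: "finite S \<Longrightarrow> v \<in> S \<Longrightarrow> w \<in> S \<Longrightarrow> v < w \<Longrightarrow> rk S v < rk S w"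
  unfolding rk_def by (rule psubset_card_mono) (auto intro: less_trans)

lemma rk_bound: "finite S \<Longrightarrow> v \<in> S \<Longrightarrow> rk S v < card S"
  unfolding rk_def by (rule psubset_card_mono) auto

lemma rk_sgn: "finite S \<Longrightarrow> v \<in> S \<Longrightarrow> w \<in> S \<Longrightarrow>
    sgn (v - w) = real_of_int (sgn (int (rk S v) - int (rk S w)))"
proof -
  assume a: "finite S" "v \<in> S" "w \<in> S"
  consider "v < w" | "v = w" | "w < v" by fastforce
  then show ?thesis
  proof cases
    case 1 then have "rk S v < rk S w" using rk_less a by blast
    then show ?thesis using 1 by simp
  next
    case 2 then show ?thesis by simp
  next
    case 3 then have "rk S w < rk S v" using rk_less a by blast
    then show ?thesis using 3 by simp
  qed
qed

lemma sgn_triple: "sgn (u::real) = sgn v \<Longrightarrow> [u < 0, u \<le> 0, u = 0] = [v < 0, v \<le> 0, v = 0]"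
  by (auto simp: sgn_if split: if_splits)

lemma sgn_trans_int: "sgn ((p::int) - q) = sgn (q - r) \<Longrightarrow> sgn (p - r) = sgn (p - q)"
  by (auto simp: sgn_if split: if_splits)

lemma semilinear_bound:
  assumes sl: "semilinear_graph t V E" and nc: "\<not> has_clique V E s" and ni: "\<not> has_indep V E n"
    and D: "2 * card V \<le> 2^D"
  shows "card V \<le> (3*(D+1))^t * s^(3^t) * (n-1)"
proof -
  from sl obtain d b a c \<phi> where finV: "finite V" and sym: "\<forall>x\<in>V. \<forall>y\<in>V. x\<noteq>y \<longrightarrow> (E x y \<longleftrightarrow> E y x)"
    and rep: "\<forall>x\<in>V. \<forall>y\<in>V. x\<noteq>y \<longrightarrow> (E x y \<longleftrightarrow> \<phi> (sign_pattern t (\<lambda>i. lin_eval d (b i) (a i) (c i)) x y))"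
    unfolding semilinear_graph_def by blast
  define F where "F i = lin_eval d (b i) (a i) (c i)" for i
  define U where "U i x = (\<Sum>j<d. a i j * x!j)" for i x
  define W where "W i y = - b i - (\<Sum>j<d. c i j * y!j)" for i y
  have Feq: "F i x y = U i x - W i y" for i x y
    unfolding F_def lin_eval_def U_def W_def by simp
  define S where "S i = U i ` V \<union> W i ` V" for i
  have finS: "finite (S i)" for i using finV S_def by simp
  have cardS: "card (S i) \<le> 2 * card V" for i
  proof -
    have "card (S i) \<le> card (U i ` V) + card (W i ` V)" unfolding S_def by (rule card_Un_le)
    also have "\<dots> \<le> card V + card V" by (intro add_mono card_image_le finV)
    finally show ?thesis by simp
  qed
  define al where "al i x = rk (S i) (U i x)" for i x
  define be where "be i x = rk (S i) (W i x)" for i x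
  have al_lt: "al i x < 2^D" if "x \<in> V" for i x
  proof -
    have "al i x < card (S i)" unfolding al_def using that finS S_def by (intro rk_bound) auto
    then show ?thesis using cardS[of i] D by linarith
  qed
  have be_lt: "be i x < 2^D" if "x \<in> V" for i x
  proof -
    have "be i x < card (S i)" unfolding be_def using that finS S_def by (intro rk_bound) auto
    then show ?thesis using cardS[of i] D by linarith
  qed
  define m where "m i x = (LEAST k. al i x div 2^k = be i x div 2^k)" for i x
  have m_prop: "al i x div 2^(m i x) = be i x div 2^(m i x)" for i x
    unfolding m_def
  proof (rule LeastI[of _ "al i x + be i x"])
    have "al i x < 2^(al i x + be i x)" "be i x < 2^(al i x + be i x)"
      using less_exp[of "al i x + be i x"] by linarith+
    then show "al i x div 2^(al i x + be i x) = be i x div 2^(al i x + be i x)" by simp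
  qed
  have m_min: "al i x div 2^(m i x - 1) \<noteq> be i x div 2^(m i x - 1)" if "m i x > 0" for i x
  proof -
    have "m i x - 1 < m i x" using that by simp
    then show ?thesis using not_less_Least[of "m i x - 1" "\<lambda>k. al i x div 2^k = be i x div 2^k"]
      unfolding m_def by blast
  qed
  have m_le: "m i x \<le> D" if "x \<in> V" for i x
    unfolding m_def by (rule Least_le) (use al_lt[OF that] be_lt[OF that] in simp)
  define P where "P i x = al i x div 2^(m i x)" for i x
  define tau where "tau i x = sgn (int (al i x) - int (be i x))" for i x
  define kap where "kap x = map (\<lambda>i. (m i x, tau i x)) [0..<t]" for x
  define cv where "cv x y = map (\<lambda>i. sgn (int (P i x) - int (P i y))) [0..<t]" for x y
  obtain e :: "real list \<Rightarrow> nat" where inj: "inj_on e V"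
    using finite_imp_inj_to_nat_seg[OF finV] by blast
  define KS where "KS = {xs. set xs \<subseteq> {0..D} \<times> {-1,0,1::int} \<and> length xs = t}"
  define CS where "CS = {xs. set xs \<subseteq> {-1,0,1::int} \<and> length xs = t}"
  have cardKS: "card KS = (3*(D+1))^t"
  proof -
    have cp: "card ({0..D} \<times> {-1,0,1::int}) = 3*(D+1)" by (simp add: card_cartesian_product)
    have fin: "finite ({0..D} \<times> {-1,0,1::int})" by simp
    show ?thesis by (simp only: KS_def card_lists_length_eq[OF fin] cp)
  qed
  have cardCS: "card CS = 3^t"
  proof -
    have cp: "card {-1,0,1::int} = 3" by simp
    have fin: "finite {-1,0,1::int}" by simp
    show ?thesis by (simp only: CS_def card_lists_length_eq[OF fin] cp)
  qed
  have finKS: "finite KS" unfolding KS_def by (intro finite_lists_length_eq) auto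
  have finCS: "finite CS" unfolding CS_def by (intro finite_lists_length_eq) auto
  have kap_nth: "m i x = m i y \<and> tau i x = tau i y" if "kap x = kap y" "i < t" for x y i
  proof -
    have "kap x ! i = kap y ! i" using that by simp
    then show ?thesis using that(2) unfolding kap_def by simp
  qed
  have sgnF: "sgn (F i x y) = real_of_int (if P i x < P i y then -1 else if P i y < P i x then 1 else tau i x)"
    if xV: "x \<in> V" and yV: "y \<in> V" and kk: "kap x = kap y" and it: "i < t" for x y i
  proof -
    have "sgn (F i x y) = real_of_int (sgn (int (al i x) - int (be i y)))"
      unfolding Feq al_def be_def using xV yV finS S_def by (intro rk_sgn) auto
    moreover have "sgn (int (al i x) - int (be i y)) = (if P i x < P i y then -1 else if P i y < P i x then 1 else tau i x)"
    proof -
      have mt: "m i x = m i y" "tau i x = tau i y" using kap_nth[OF kk it] by auto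
      show ?thesis
        unfolding P_def tau_def
        using prefix_sgn[of "al i x" "m i x" "be i x" "al i y" "be i y"]
          m_prop[of i x] m_prop[of i y] m_min[of i x] m_min[of i y] mt
        unfolding tau_def by simp
    qed
    ultimately show ?thesis by simp
  qed
  have det: "E x y = E x' y'"
    if asm: "x\<in>V" "y\<in>V" "x'\<in>V" "y'\<in>V" "x\<noteq>y" "x'\<noteq>y'" "kap x = kap y" "kap x' = kap y'"
       "kap x = kap x'" "cv x y = cv x' y'" for x y x' y'
  proof -
    have sF: "sgn (F i x y) = sgn (F i x' y')" if it: "i < t" for i
    proof -
      have "cv x y ! i = cv x' y' ! i" using asm(10) by simp
      then have c: "sgn (int (P i x) - int (P i y)) = sgn (int (P i x') - int (P i y'))"
        using it unfolding cv_def by simp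
      have c1: "P i x < P i y \<longleftrightarrow> P i x' < P i y'" "P i y < P i x \<longleftrightarrow> P i y' < P i x'"
        using c by (auto simp: sgn_if split: if_splits)
      have ta: "tau i x = tau i x'" using kap_nth[OF asm(9) it] by simp
      show ?thesis
        unfolding sgnF[OF asm(1) asm(2) asm(7) it] sgnF[OF asm(3) asm(4) asm(8) it] c1 ta ..
    qed
    have "map (\<lambda>i. [F i x y < 0, F i x y \<le> 0, F i x y = 0]) [0..<t]
        = map (\<lambda>i. [F i x' y' < 0, F i x' y' \<le> 0, F i x' y' = 0]) [0..<t]"
    proof (rule map_cong[OF refl])
      fix i assume "i \<in> set [0..<t]"
      then have "i < t" by simp
      then show "[F i x y < 0, F i x y \<le> 0, F i x y = 0] = [F i x' y' < 0, F i x' y' \<le> 0, F i x' y' = 0]"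
        using sF sgn_triple by blast
    qed
    then have "sign_pattern t F x y = sign_pattern t F x' y'"
      by (unfold sign_pattern_def) (rule arg_cong[where f=concat])
    then show ?thesis using rep asm unfolding F_def by auto
  qed
  have trans: "cv x z = cv x y" if "cv x y = cv y z" for x y z
  proof -
    have "\<forall>i\<in>set [0..<t]. sgn (int (P i x) - int (P i y)) = sgn (int (P i y) - int (P i z))"
      using that unfolding cv_def map_eq_conv by blast
    then show ?thesis unfolding cv_def map_eq_conv using sgn_trans_int by blast
  qed
  have nocl: "\<not>(\<forall>x\<in>K. \<forall>y\<in>K. x\<noteq>y \<longrightarrow> E x y)" if "K \<subseteq> V" "card K = s" for K
    using nc that unfolding has_clique_def by blast
  have noind: "\<not>(\<forall>x\<in>I. \<forall>y\<in>I. x\<noteq>y \<longrightarrow> \<not> E x y)" if "I \<subseteq> V" "card I = n" for I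
    using ni that unfolding has_indep_def by blast
  have KSr: "kap ` V \<subseteq> KS"
  proof
    fix k assume "k \<in> kap ` V"
    then obtain x where x: "x \<in> V" "k = kap x" by blast
    have "tau i x \<in> {-1,0,1}" for i unfolding tau_def by (auto simp: sgn_if)
    then show "k \<in> KS" unfolding KS_def x(2) kap_def using m_le[OF x(1)] by auto
  qed
  have CSr: "cv x y \<in> CS" for x y
    unfolding CS_def cv_def by (auto simp: sgn_if)
  have "card V \<le> card KS * s ^ card CS * (n - 1)"
  proof -
    have symr: "\<And>x y. x\<in>V \<Longrightarrow> y\<in>V \<Longrightarrow> x\<noteq>y \<Longrightarrow> E x y = E y x" using sym by blast
    have transr: "\<And>x y z. x\<in>V \<Longrightarrow> y\<in>V \<Longrightarrow> z\<in>V \<Longrightarrow> cv x y = cv y z \<Longrightarrow> cv x z = cv x y"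
      using trans by blast
    have CSr2: "\<And>x y. x\<in>V \<Longrightarrow> y\<in>V \<Longrightarrow> cv x y \<in> CS" using CSr by blast
    show ?thesis
      by (rule coloring_bound[where kap=kap and cv=cv and e=e and E=E, OF finV inj symr transr det nocl noind KSr finKS CSr2 finCS])
  qed
  then show ?thesis using cardKS cardCS by simp
qed

lemma ln2_ge_half: "ln (2::real) \<ge> 1/2"
proof -
  have "ln (1/2::real) \<le> 1/2 - 1" by (rule ln_le_minus_one) simp
  then show ?thesis by (simp add: ln_div)
qed

lemma step1:
  fixes x A :: real and t :: nat
  assumes t: "t > 0" and x: "x \<ge> 1" and A: "A > 0"
    and h: "x \<le> A * (6 * ln x + 9) ^ t"
  shows "x \<le> (A * (12 * real t + 9) ^ t)^2"
proof -
  define y where "y = x powr (1 / (2 * real t))"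
  have y1: "y \<ge> 1" unfolding y_def using x t by (simp add: ge_one_powr_ge_zero)
  have "ln x \<le> x powr (1 / (2 * real t)) / (1 / (2 * real t))"
    by (rule ln_powr_bound) (use x t in auto)
  then have lnx: "ln x \<le> 2 * real t * y" unfolding y_def by (simp add: mult.commute)
  have "6 * ln x + 9 \<le> (12 * real t + 9) * y"
    using lnx y1 by (simp add: algebra_simps)
  moreover have "0 \<le> 6 * ln x + 9" using x by simp
  ultimately have "(6 * ln x + 9) ^ t \<le> ((12 * real t + 9) * y) ^ t"
    by (rule power_mono)
  also have "\<dots> = (12 * real t + 9) ^ t * y ^ t" by (simp add: power_mult_distrib)
  also have "y ^ t = sqrt x"
  proof -
    have "y ^ t = y powr (real t)" using y1 by (simp add: powr_realpow)
    also have "\<dots> = x powr (1 / (2 * real t) * real t)" unfolding y_def by (simp add: powr_powr)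
    also have "\<dots> = x powr (1/2)" using t by simp
    also have "\<dots> = sqrt x" using x by (simp add: powr_half_sqrt)
    finally show ?thesis .
  qed
  finally have "x \<le> A * ((12 * real t + 9) ^ t * sqrt x)"
    using h A by (meson mult_left_mono less_imp_le order_trans)
  then have "sqrt x * sqrt x \<le> (A * (12 * real t + 9) ^ t) * sqrt x"
    using x by (simp add: algebra_simps)
  moreover have sx: "sqrt x > 0" using x by simp
  ultimately have "sqrt x \<le> A * (12 * real t + 9) ^ t"
    by (meson mult_le_cancel_right_pos)
  then have "(sqrt x)^2 \<le> (A * (12 * real t + 9) ^ t)^2"
    by (rule power_mono) (use x in simp)
  then show ?thesis using x by simp
qed


lemma step2:
  fixes x :: real and s n t B :: nat
  assumes t: "t > 0" and x: "x \<ge> 1" and s: "s \<ge> 1" and n: "n \<ge> 2"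
    and h: "x \<le> real n * real s ^ B * (6 * ln x + 9) ^ t"
  shows "x \<le> (30 + 24 * real B + 24 * real t * ln (12 * real t + 9)) ^ t * real s ^ (B + t) * real n * (ln (real n)) ^ t"
proof -
  define C1 :: real where "C1 = 12 * real t + 9"
  define C2 :: real where "C2 = 30 + 24 * real B + 24 * real t * ln C1"
  define A :: real where "A = real n * real s ^ B"
  define L where "L = ln (real n)"
  have A0: "A > 0" unfolding A_def using s n by simp
  have C11: "C1 \<ge> 1" unfolding C1_def by simp
  have x1: "x \<le> (A * C1 ^ t)^2"
    using step1[OF t x A0] h unfolding A_def C1_def by simp
  have pos: "(A * C1 ^ t)^2 > 0" using A0 C11 by simp
  have "ln x \<le> ln ((A * C1 ^ t)^2)"
    using ln_le_cancel_iff[of x "(A * C1 ^ t)^2"] x1 x pos by simp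
  also have "\<dots> = 2 * (ln (real n) + real B * ln (real s) + real t * ln C1)"
  proof -
    have C10: "C1 > 0" using C11 by simp
    have "ln ((A * C1 ^ t)^2) = 2 * ln (A * C1 ^ t)" by (simp add: ln_realpow)
    also have "ln (A * C1 ^ t) = ln A + ln (C1 ^ t)" using A0 C10 by (simp add: ln_mult_pos)
    also have "ln (C1 ^ t) = real t * ln C1" by (simp add: ln_realpow)
    also have "ln A = ln (real n) + ln (real s ^ B)" unfolding A_def using s n by (simp add: ln_mult_pos)
    also have "ln (real s ^ B) = real B * ln (real s)" by (simp add: ln_realpow)
    finally show ?thesis by simp
  qed
  finally have lnx: "ln x \<le> 2 * (L + real B * ln (real s) + real t * ln C1)" unfolding L_def .
  have L2: "2 * L \<ge> 1"
  proof -
    have "ln (2::real) \<le> L" unfolding L_def using n by (subst ln_le_cancel_iff) auto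
    then show ?thesis using ln2_ge_half by linarith
  qed
  have L0: "L \<ge> 0" using L2 by linarith
  have lnC1: "ln C1 \<ge> 0" using C11 by simp
  have lns: "ln (real s) \<le> real s" using s by (intro ln_bound) simp
  have s1: "real s \<ge> 1" using s by simp
  have f1: "L \<le> real s * L" using s1 L0 by (simp add: mult_right_mono_neg mult_le_cancel_right1)
  have f2: "real B * ln (real s) \<le> real B * real s" using lns by (simp add: mult_left_mono)
  have f3: "real B * real s \<le> real B * real s * (2 * L)"
    using mult_left_mono[OF L2, of "real B * real s"] by simp
  have f4: "12 * real t * ln C1 + 9 \<le> (12 * real t * ln C1 + 9) * (2 * L)"
    using mult_left_mono[OF L2, of "12 * real t * ln C1 + 9"] lnC1 by simp
  have f5: "(12 * real t * ln C1 + 9) * (2 * L) \<le> (12 * real t * ln C1 + 9) * (2 * L) * real s"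
    using mult_left_mono[OF s1, of "(12 * real t * ln C1 + 9) * (2 * L)"] L0 lnC1 by simp
  have key: "6 * ln x + 9 \<le> C2 * real s * L"
  proof -
    have "6 * ln x + 9 \<le> 12 * L + 12 * (real B * ln (real s)) + 12 * real t * ln C1 + 9"
      using lnx by (simp add: algebra_simps)
    also have "\<dots> \<le> 12 * (real s * L) + 12 * (real B * real s * (2 * L)) + (12 * real t * ln C1 + 9) * (2 * L) * real s"
      using f1 f2 f3 f4 f5 by linarith
    also have "\<dots> \<le> C2 * real s * L"
      unfolding C2_def using s1 L0 lnC1 by (simp add: algebra_simps)
    finally show ?thesis .
  qed
  have "0 \<le> 6 * ln x + 9" using x by simp
  then have "(6 * ln x + 9) ^ t \<le> (C2 * real s * L) ^ t" by (rule power_mono[OF key])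
  then have "x \<le> real n * real s ^ B * (C2 * real s * L) ^ t"
    using h by (meson mult_left_mono order_trans of_nat_0_le_iff zero_le_power mult_nonneg_nonneg)
  also have "\<dots> = C2 ^ t * real s ^ (B + t) * real n * L ^ t"
    by (simp add: power_mult_distrib power_add algebra_simps)
  finally show ?thesis unfolding C2_def C1_def L_def .
qed


lemma R_bound:
  assumes s: "s > 0" and n: "n \<ge> 2" and R0: "R_semilin t s n > 0"
  shows "real (R_semilin t s n) \<le> real n * real s ^ (3^t) * (6 * ln (real (R_semilin t s n)) + 9) ^ t"
proof -
  define R where "R = R_semilin t s n"
  have "R - 1 < R" using R0 R_def by simp
  then have "\<not> (\<forall>V E. semilinear_graph t V E \<and> card V = R - 1 \<longrightarrow> has_clique V E s \<or> has_indep V E n)"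
    unfolding R_def R_semilin_def by (rule not_less_Least)
  then obtain V E where VE: "semilinear_graph t V E" "card V = R - 1" "\<not> has_clique V E s" "\<not> has_indep V E n"
    by blast
  have R1: "real R \<ge> 1" using R0 R_def by simp
  define D where "D = nat \<lceil>log 2 (2 * real R)\<rceil>"
  have lg: "log 2 (2 * real R) \<ge> 0" using R1 by simp
  have Deq: "real D = real_of_int \<lceil>log 2 (2 * real R)\<rceil>"
    unfolding D_def using lg by simp
  have Dge: "real D \<ge> log 2 (2 * real R)" using Deq by linarith
  have l2: "log 2 (2 * real R) = 1 + log 2 (real R)" using R1 by (simp add: log_mult)
  have Dle: "real D \<le> log 2 (real R) + 2" using Deq l2 by linarith
  have "2 * real R = 2 powr (log 2 (2 * real R))" using R1 by simp
  also have "\<dots> \<le> 2 powr (real D)" using Dge by simp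
  also have "\<dots> = real (2 ^ D)" by (simp add: powr_realpow)
  finally have "2 * R \<le> 2 ^ D" by linarith
  then have pw: "2 * card V \<le> 2 ^ D" using VE(2) by simp
  have cb: "card V \<le> (3*(D+1))^t * s^(3^t) * (n-1)"
    by (rule semilinear_bound[OF VE(1) VE(3) VE(4) pw])
  define K where "K = (3*(D+1))^t * s^(3^t)"
  have K1: "K \<ge> 1" unfolding K_def using s by simp
  have "R \<le> K * (n - 1) + 1" using cb VE(2) K_def R0 R_def by simp
  also have "\<dots> \<le> K * n"
  proof -
    have "K * n = K * (n - 1) + K" using n by (cases n) auto
    then show ?thesis using K1 by linarith
  qed
  finally have RKn: "R \<le> K * n" .
  have RK: "real R \<le> real n * real s ^ (3^t) * real (3*(D+1)) ^ t"
  proof -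
    have "real R \<le> real (K * n)" using RKn by (simp only: of_nat_le_iff)
    also have "real (K * n) = real n * real s ^ (3^t) * real (3*(D+1)) ^ t"
      unfolding K_def by (simp only: of_nat_mult of_nat_power mult_ac)
    finally show ?thesis .
  qed
  have lnR: "ln (real R) \<ge> 0" using R1 by simp
  have "log 2 (real R) = ln (real R) / ln 2" by (simp add: log_def)
  also have "\<dots> \<le> 2 * ln (real R)"
  proof -
    have l2p: "ln (2::real) > 0" by simp
    have "1 \<le> 2 * ln (2::real)" using ln2_ge_half by linarith
    then have "ln (real R) * 1 \<le> ln (real R) * (2 * ln 2)" using lnR by (rule mult_left_mono)
    then have "ln (real R) \<le> 2 * ln (real R) * ln 2" by (simp add: algebra_simps)
    then show ?thesis using l2p by (simp add: divide_le_eq)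
  qed
  finally have "real (3*(D+1)) \<le> 6 * ln (real R) + 9" using Dle by simp
  moreover have "0 \<le> real (3*(D+1))" by simp
  ultimately have "real (3*(D+1)) ^ t \<le> (6 * ln (real R) + 9) ^ t" by (intro power_mono)
  then have "real R \<le> real n * real s ^ (3^t) * (6 * ln (real R) + 9) ^ t"
    using RK by (meson mult_left_mono order_trans of_nat_0_le_iff zero_le_power mult_nonneg_nonneg)
  then show ?thesis unfolding R_def .
qed

theorem theorem1p1:
  fixes t :: nat
  assumes "t > 0"
  shows "\<exists>\<alpha> \<beta> \<gamma> :: real. \<alpha> > 0 \<and> \<beta> > 0 \<and> \<gamma> > 0 \<and>
           (\<forall>s n :: nat. s > 0 \<longrightarrow> n \<ge> 2 \<longrightarrow>
              real (R_semilin t s n) \<le> \<alpha> * real s powr \<beta> * real n * ln (real n) powr \<gamma>)"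
proof -
  define B :: nat where "B = 3^t"
  define C2 :: real where "C2 = 30 + 24 * real B + 24 * real t * ln (12 * real t + 9)"
  have lnC: "ln (12 * real t + 9) \<ge> 0" by simp
  have C2p: "C2 > 0" unfolding C2_def using lnC by (simp add: add_pos_nonneg)
  show ?thesis
  proof (intro exI conjI allI impI)
    show "C2 ^ t > 0" using C2p by simp
    show "real (B + t) > 0" using assms by simp
    show "real t > 0" using assms by simp
  next
    fix s n :: nat assume s: "s > 0" and n: "n \<ge> 2"
    have lnn: "ln (real n) > 0" using n by simp
    have eq1: "real s powr real (B + t) = real s ^ (B + t)" by (rule powr_realpow) (use s in simp)
    have eq2: "ln (real n) powr real t = ln (real n) ^ t" by (rule powr_realpow) (use lnn in simp)
    show "real (R_semilin t s n) \<le> C2 ^ t * real s powr real (B + t) * real n * ln (real n) powr real t"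
    proof (cases "R_semilin t s n = 0")
      case True
      then show ?thesis using C2p lnn by simp
    next
      case False
      then have R0: "R_semilin t s n > 0" by simp
      have h: "real (R_semilin t s n) \<le> real n * real s ^ B * (6 * ln (real (R_semilin t s n)) + 9) ^ t"
        using R_bound[OF s n R0] unfolding B_def .
      have x1: "real (R_semilin t s n) \<ge> 1" using R0 by simp
      have "real (R_semilin t s n) \<le> C2 ^ t * real s ^ (B + t) * real n * (ln (real n)) ^ t"
        unfolding C2_def by (rule step2[OF assms x1 _ n h]) (use s in simp)
      then show ?thesis unfolding eq1 eq2 .
    qed
  qed
qed

end
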